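(* Let $R$ be a $\mathbb{C}$-algebra which is a noetherian UFD, let $r,s\in R$ be nonzero elements sharing no common non-unit factor, and let $A_{r,s}:=R[U,V]/(rU-sV-1)$ with $u,v$ the residue classes of $U,V$. Assume that $A_{r,s}$ is a UFD and that $ML(A_{r,s})=R$. Then $\operatorname{LND}(A_{r,s})=R\,E=\{aE: a\in R\}$, where $E$ is the $R$-derivation of $A_{r,s}$ determined by $E(u)=s$, $E(v)=r$.
   Context: A derivation $D$ of a ring $B$ is locally nilpotent if for every $b\in B$ there is $n$ with $D^n(b)=0$; $\operatorname{LND}(B)$ denotes the set of locally nilpotent $\mathbb{C}$-derivations of the $\mathbb{C}$-algebra $B$. The Makar-Limanov invariant $ML(B)$ is the intersection of the kernels of all $D\in\operatorname{LND}(B)$. The derivation $E$ (written $s\partial_u+r\partial_v$ in the paper) is well defined since $E(ru-sv-1)=rs-sr=0$. *)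

theory Defs
  imports Complex_Main "HOL-Algebra.Algebra"
begin

definition complex_ring :: "complex ring" where
  "complex_ring = \<lparr>carrier = UNIV, monoid.mult = (*), one = 1, ring.zero = 0, ring.add = (+)\<rparr>"

text \<open>The bivariate polynomial ring R[U,V], realised as (R[U])[V].\<close>
abbreviation UP2 :: "('a, 'm) ring_scheme \<Rightarrow> (nat \<Rightarrow> 'a, nat \<Rightarrow> nat \<Rightarrow> 'a) up_ring" where
  "UP2 R \<equiv> UP (UP R)"

definition cst2 :: "('a, 'm) ring_scheme \<Rightarrow> 'a \<Rightarrow> nat \<Rightarrow> nat \<Rightarrow> 'a" where
  "cst2 R a = monom (UP2 R) (monom (UP R) a 0) 0"

definition Uvar :: "('a, 'm) ring_scheme \<Rightarrow> nat \<Rightarrow> nat \<Rightarrow> 'a" where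
  "Uvar R = monom (UP2 R) (monom (UP R) \<one>\<^bsub>R\<^esub> 1) 0"

definition Vvar :: "('a, 'm) ring_scheme \<Rightarrow> nat \<Rightarrow> nat \<Rightarrow> 'a" where
  "Vvar R = monom (UP2 R) \<one>\<^bsub>UP R\<^esub> 1"

definition frs :: "('a, 'm) ring_scheme \<Rightarrow> 'a \<Rightarrow> 'a \<Rightarrow> nat \<Rightarrow> nat \<Rightarrow> 'a" where
  "frs R r s = (cst2 R r \<otimes>\<^bsub>UP2 R\<^esub> Uvar R) \<ominus>\<^bsub>UP2 R\<^esub> (cst2 R s \<otimes>\<^bsub>UP2 R\<^esub> Vvar R)
                \<ominus>\<^bsub>UP2 R\<^esub> \<one>\<^bsub>UP2 R\<^esub>"

definition Ars :: "('a, 'm) ring_scheme \<Rightarrow> 'a \<Rightarrow> 'a \<Rightarrow> (nat \<Rightarrow> nat \<Rightarrow> 'a) set ring" where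
  "Ars R r s = (UP2 R) Quot (PIdl\<^bsub>UP2 R\<^esub> (frs R r s))"

definition resid :: "('a, 'm) ring_scheme \<Rightarrow> 'a \<Rightarrow> 'a \<Rightarrow> (nat \<Rightarrow> nat \<Rightarrow> 'a) \<Rightarrow> (nat \<Rightarrow> nat \<Rightarrow> 'a) set" where
  "resid R r s p = (PIdl\<^bsub>UP2 R\<^esub> (frs R r s)) +>\<^bsub>UP2 R\<^esub> p"

definition rho :: "('a, 'm) ring_scheme \<Rightarrow> 'a \<Rightarrow> 'a \<Rightarrow> 'a \<Rightarrow> (nat \<Rightarrow> nat \<Rightarrow> 'a) set" where
  "rho R r s a = resid R r s (cst2 R a)"

definition uel :: "('a, 'm) ring_scheme \<Rightarrow> 'a \<Rightarrow> 'a \<Rightarrow> (nat \<Rightarrow> nat \<Rightarrow> 'a) set" where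
  "uel R r s = resid R r s (Uvar R)"

definition vel :: "('a, 'm) ring_scheme \<Rightarrow> 'a \<Rightarrow> 'a \<Rightarrow> (nat \<Rightarrow> nat \<Rightarrow> 'a) set" where
  "vel R r s = resid R r s (Vvar R)"

definition lin_derivation :: "('x, 'n) ring_scheme \<Rightarrow> 'c set \<Rightarrow> ('c \<Rightarrow> 'x) \<Rightarrow> ('x \<Rightarrow> 'x) \<Rightarrow> bool" where
  "lin_derivation A S emb D \<longleftrightarrow>
     D \<in> carrier A \<rightarrow> carrier A \<and>
     (\<forall>x\<in>carrier A. \<forall>y\<in>carrier A. D (x \<oplus>\<^bsub>A\<^esub> y) = D x \<oplus>\<^bsub>A\<^esub> D y) \<and>
     (\<forall>x\<in>carrier A. \<forall>y\<in>carrier A. D (x \<otimes>\<^bsub>A\<^esub> y) = (x \<otimes>\<^bsub>A\<^esub> D y) \<oplus>\<^bsub>A\<^esub> (D x \<otimes>\<^bsub>A\<^esub> y)) \<and>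
     (\<forall>c\<in>S. \<forall>x\<in>carrier A. D (emb c \<otimes>\<^bsub>A\<^esub> x) = emb c \<otimes>\<^bsub>A\<^esub> D x)"

definition is_LND :: "('x, 'n) ring_scheme \<Rightarrow> (complex \<Rightarrow> 'x) \<Rightarrow> ('x \<Rightarrow> 'x) \<Rightarrow> bool" where
  "is_LND A cemb D \<longleftrightarrow> lin_derivation A (UNIV :: complex set) cemb D \<and>
     (\<forall>b\<in>carrier A. \<exists>n. (D ^^ n) b = \<zero>\<^bsub>A\<^esub>)"

definition makar_limanov :: "('x, 'n) ring_scheme \<Rightarrow> (complex \<Rightarrow> 'x) \<Rightarrow> 'x set" where
  "makar_limanov A cemb = {x \<in> carrier A. \<forall>D. is_LND A cemb D \<longrightarrow> D x = \<zero>\<^bsub>A\<^esub>}"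

end

theory Submission
  imports Defs
begin


lemma (in ring) finsum_closed_pred:
  assumes "finite F" "f \<in> F \<rightarrow> carrier R" "\<And>i. i \<in> F \<Longrightarrow> Q (f i)" "Q \<zero>"
    and "\<And>x y. x \<in> carrier R \<Longrightarrow> y \<in> carrier R \<Longrightarrow> Q x \<Longrightarrow> Q y \<Longrightarrow> Q (x \<oplus> y)"
  shows "Q (finsum R f F)"
  using assms(1,2,3)
proof (induction F rule: finite_induct)
  case empty then show ?case using assms(4) by simp
next
  case (insert x F)
  then show ?case using assms(5) by (simp add: finsum_insert Pi_def)
qed

lemma (in ring) pow_closed_pred:
  assumes "x \<in> carrier R" "Q x" "Q \<one>"
    and "\<And>x y. x \<in> carrier R \<Longrightarrow> y \<in> carrier R \<Longrightarrow> Q x \<Longrightarrow> Q y \<Longrightarrow> Q (x \<otimes> y)"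
  shows "Q (x [^] (n::nat))"
proof (induction n)
  case 0 then show ?case using assms by simp
next
  case (Suc n) then show ?case using assms by simp
qed

lemma (in UP_cring) hom_gen:
  assumes h: "h \<in> ring_hom P S" and S: "ring S"
    and add: "\<And>x y. x \<in> carrier S \<Longrightarrow> y \<in> carrier S \<Longrightarrow> Q x \<Longrightarrow> Q y \<Longrightarrow> Q (x \<oplus>\<^bsub>S\<^esub> y)"
    and mul: "\<And>x y. x \<in> carrier S \<Longrightarrow> y \<in> carrier S \<Longrightarrow> Q x \<Longrightarrow> Q y \<Longrightarrow> Q (x \<otimes>\<^bsub>S\<^esub> y)"
    and cst: "\<And>a. a \<in> carrier R \<Longrightarrow> Q (h (UnivPoly.monom P a 0))"
    and X: "Q (h (UnivPoly.monom P \<one> 1))"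
    and p: "p \<in> carrier P"
  shows "Q (h p)"
proof -
  interpret hh: ring_hom_ring P S h
    by (rule ring_hom_ringI2) (simp_all add: UP_ring S h)
  have Q0: "Q \<zero>\<^bsub>S\<^esub>" using cst[of \<zero>] by simp
  have Q1: "Q \<one>\<^bsub>S\<^esub>" using cst[of \<one>] by simp
  have e: "(\<Oplus>\<^bsub>P \<^esub>i \<in> {..deg R p}. UnivPoly.monom P (UnivPoly.coeff P p i) 0 \<otimes>\<^bsub>P\<^esub> UnivPoly.monom P \<one> 1 [^]\<^bsub>P\<^esub> i) = p"
    by (simp add: up_repr p monom_mult [THEN sym] monom_pow del: monom_mult)
  have "h p = h (\<Oplus>\<^bsub>P \<^esub>i \<in> {..deg R p}. UnivPoly.monom P (UnivPoly.coeff P p i) 0 \<otimes>\<^bsub>P\<^esub> UnivPoly.monom P \<one> 1 [^]\<^bsub>P\<^esub> i)"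
    using e by simp
  also have "\<dots> = (\<Oplus>\<^bsub>S \<^esub>i \<in> {..deg R p}. h (UnivPoly.monom P (UnivPoly.coeff P p i) 0 \<otimes>\<^bsub>P\<^esub> UnivPoly.monom P \<one> 1 [^]\<^bsub>P\<^esub> i))"
    using p by (subst hh.hom_finsum) (simp_all add: Pi_def comp_def)
  also have "\<dots> = (\<Oplus>\<^bsub>S \<^esub>i \<in> {..deg R p}. h (UnivPoly.monom P (UnivPoly.coeff P p i) 0) \<otimes>\<^bsub>S\<^esub> h (UnivPoly.monom P \<one> 1) [^]\<^bsub>S\<^esub> i)"
    using p by (intro hh.S.finsum_cong') (simp_all add: Pi_def hh.hom_nat_pow)
  also have "Q \<dots>"
  proof (rule ring.finsum_closed_pred[OF S])
    fix i assume "i \<in> {..deg R p}"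
    have "Q (h (UnivPoly.monom P \<one> 1) [^]\<^bsub>S\<^esub> i)"
      by (rule ring.pow_closed_pred[OF S]) (simp_all add: X[unfolded One_nat_def] Q1 mul)
    then show "Q (h (UnivPoly.monom P (UnivPoly.coeff P p i) 0) \<otimes>\<^bsub>S\<^esub> h (UnivPoly.monom P \<one> 1) [^]\<^bsub>S\<^esub> i)"
      using p by (intro mul) (simp_all add: cst)
  qed (use p in \<open>simp_all add: Pi_def Q0 add\<close>)
  finally show ?thesis .
qed

definition DN :: "('x, 'm) ring_scheme \<Rightarrow> ('x \<times> 'x) ring" where
  "DN A = \<lparr>carrier = carrier A \<times> carrier A,
     monoid.mult = (\<lambda>x y. (fst x \<otimes>\<^bsub>A\<^esub> fst y, fst x \<otimes>\<^bsub>A\<^esub> snd y \<oplus>\<^bsub>A\<^esub> snd x \<otimes>\<^bsub>A\<^esub> fst y)),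
     one = (\<one>\<^bsub>A\<^esub>, \<zero>\<^bsub>A\<^esub>), ring.zero = (\<zero>\<^bsub>A\<^esub>, \<zero>\<^bsub>A\<^esub>),
     ring.add = (\<lambda>x y. (fst x \<oplus>\<^bsub>A\<^esub> fst y, snd x \<oplus>\<^bsub>A\<^esub> snd y))\<rparr>"

lemma DN_simps:
  "carrier (DN A) = carrier A \<times> carrier A"
  "x \<otimes>\<^bsub>DN A\<^esub> y = (fst x \<otimes>\<^bsub>A\<^esub> fst y, fst x \<otimes>\<^bsub>A\<^esub> snd y \<oplus>\<^bsub>A\<^esub> snd x \<otimes>\<^bsub>A\<^esub> fst y)"
  "\<one>\<^bsub>DN A\<^esub> = (\<one>\<^bsub>A\<^esub>, \<zero>\<^bsub>A\<^esub>)"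
  "\<zero>\<^bsub>DN A\<^esub> = (\<zero>\<^bsub>A\<^esub>, \<zero>\<^bsub>A\<^esub>)"
  "x \<oplus>\<^bsub>DN A\<^esub> y = (fst x \<oplus>\<^bsub>A\<^esub> fst y, snd x \<oplus>\<^bsub>A\<^esub> snd y)"
  by (simp_all add: DN_def)

lemma (in cring) DN_cring: "cring (DN R)"
proof (rule cringI)
  show "abelian_group (DN R)"
  proof (rule abelian_groupI)
    fix x assume x: "x \<in> carrier (DN R)"
    then show "\<exists>y\<in>carrier (DN R). y \<oplus>\<^bsub>DN R\<^esub> x = \<zero>\<^bsub>DN R\<^esub>"
      by (intro bexI[of _ "(\<ominus> fst x, \<ominus> snd x)"]) (auto simp: DN_simps mem_Times_iff l_neg)
  qed (auto simp: DN_simps mem_Times_iff a_ac)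
  show "comm_monoid (DN R)"
    by (rule comm_monoidI) (auto simp: DN_simps mem_Times_iff m_ac r_distr l_distr a_ac)
  fix x y z assume "x \<in> carrier (DN R)" "y \<in> carrier (DN R)" "z \<in> carrier (DN R)"
  then show "(x \<oplus>\<^bsub>DN R\<^esub> y) \<otimes>\<^bsub>DN R\<^esub> z = x \<otimes>\<^bsub>DN R\<^esub> z \<oplus>\<^bsub>DN R\<^esub> y \<otimes>\<^bsub>DN R\<^esub> z"
    by (auto simp: DN_simps mem_Times_iff m_ac r_distr l_distr a_ac)
qed

lemma (in cring) fst_DN_hom: "fst \<in> ring_hom (DN R) R"
  by (rule ring_hom_memI) (auto simp: DN_simps mem_Times_iff)

lemma (in cring) DN_minus:
  assumes x: "x \<in> carrier (DN R)" and y: "y \<in> carrier (DN R)"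
  shows "x \<ominus>\<^bsub>DN R\<^esub> y = (fst x \<ominus> fst y, snd x \<ominus> snd y)"
proof -
  interpret D: cring "DN R" by (rule DN_cring)
  have "\<ominus>\<^bsub>DN R\<^esub> y = (\<ominus> fst y, \<ominus> snd y)"
    using y by (intro D.minus_equality) (auto simp: DN_simps mem_Times_iff l_neg)
  then show ?thesis using x y by (simp add: D.minus_eq minus_eq DN_simps)
qed

lemma (in ring_hom_ring) hom_minus2:
  "x \<in> carrier R \<Longrightarrow> y \<in> carrier R \<Longrightarrow> h (x \<ominus>\<^bsub>R\<^esub> y) = h x \<ominus>\<^bsub>S\<^esub> h y"
  by (simp add: a_minus_def)

definition der :: "('x, 'n) ring_scheme \<Rightarrow> ('x \<Rightarrow> 'x) \<Rightarrow> bool" where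
  "der A D \<longleftrightarrow> D \<in> carrier A \<rightarrow> carrier A \<and>
     (\<forall>x\<in>carrier A. \<forall>y\<in>carrier A. D (x \<oplus>\<^bsub>A\<^esub> y) = D x \<oplus>\<^bsub>A\<^esub> D y) \<and>
     (\<forall>x\<in>carrier A. \<forall>y\<in>carrier A. D (x \<otimes>\<^bsub>A\<^esub> y) = (x \<otimes>\<^bsub>A\<^esub> D y) \<oplus>\<^bsub>A\<^esub> (D x \<otimes>\<^bsub>A\<^esub> y))"

lemma lin_der: "lin_derivation A S emb D \<Longrightarrow> der A D"
  unfolding lin_derivation_def der_def by blast

context cring
begin

lemma der_cl: "der R D \<Longrightarrow> x \<in> carrier R \<Longrightarrow> D x \<in> carrier R"
  unfolding der_def by blast
lemma der_add: "der R D \<Longrightarrow> x \<in> carrier R \<Longrightarrow> y \<in> carrier R \<Longrightarrow> D (x \<oplus> y) = D x \<oplus> D y"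
  unfolding der_def by blast
lemma der_mult: "der R D \<Longrightarrow> x \<in> carrier R \<Longrightarrow> y \<in> carrier R \<Longrightarrow> D (x \<otimes> y) = x \<otimes> D y \<oplus> D x \<otimes> y"
  unfolding der_def by blast

lemma der_pow_cl: "der R D \<Longrightarrow> x \<in> carrier R \<Longrightarrow> (D ^^ n) x \<in> carrier R"
  by (induction n) (simp_all add: der_cl)

lemma der_zero: assumes "der R D" shows "D \<zero> = \<zero>"
proof -
  have c: "D \<zero> \<in> carrier R" using der_cl[OF assms] by simp
  have "D \<zero> = D \<zero> \<oplus> D \<zero>" using der_add[OF assms, of \<zero> \<zero>] by simp
  then show ?thesis using c by (metis add.l_cancel_one' zero_closed) 
qed

lemma der_pow_zero: "der R D \<Longrightarrow> (D ^^ n) \<zero> = \<zero>"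
  by (induction n) (simp_all add: der_zero)

lemma der_pow_add: "der R D \<Longrightarrow> x \<in> carrier R \<Longrightarrow> y \<in> carrier R \<Longrightarrow>
   (D ^^ n) (x \<oplus> y) = (D ^^ n) x \<oplus> (D ^^ n) y"
  by (induction n) (simp_all add: der_add der_pow_cl)

lemma der_one: assumes "der R D" shows "D \<one> = \<zero>"
proof -
  have c: "D \<one> \<in> carrier R" using der_cl[OF assms] by simp
  have "D \<one> = D \<one> \<oplus> D \<one>" using der_mult[OF assms, of \<one> \<one>] c by simp
  then show ?thesis using c by (metis add.l_cancel_one' zero_closed) 
qed

lemma der_natc: assumes "der R D" shows "D ([(k::nat)] \<cdot> \<one>) = \<zero>"
proof (induction k)
  case 0 then show ?case using der_zero[OF assms] by simp
next
  case (Suc k)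
  have "[Suc k] \<cdot> \<one> = [k] \<cdot> \<one> \<oplus> \<one>" by (simp add: add.nat_pow_Suc)
  then show ?case using Suc der_add[OF assms, of "[k] \<cdot> \<one>" \<one>] der_one[OF assms] by simp
qed

lemma der_pow_kill: assumes "der R D" "c \<in> carrier R" "D c = \<zero>" "x \<in> carrier R"
  shows "(D ^^ n) (c \<otimes> x) = c \<otimes> (D ^^ n) x"
  using assms(4)
proof (induction n)
  case 0 then show ?case by simp
next
  case (Suc n)
  have c1: "D ((D ^^ n) x) \<in> carrier R" using der_cl[OF assms(1) der_pow_cl[OF assms(1) Suc.prems]] .
  then show ?case using Suc assms der_mult[OF assms(1) assms(2) der_pow_cl[OF assms(1) Suc.prems, of n]]
      der_pow_cl[OF assms(1) Suc.prems, of n] by simp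
qed

lemma der_pow_Suc': "(D ^^ Suc k) x = (D ^^ k) (D x)"
  by (simp only: funpow_Suc_right o_apply)

lemma der_leibniz_top:
  assumes D: "der R D"
  shows "\<And>m n a b. m + n = N \<Longrightarrow> a \<in> carrier R \<Longrightarrow> b \<in> carrier R \<Longrightarrow>
    (D ^^ Suc m) a = \<zero> \<Longrightarrow> (D ^^ Suc n) b = \<zero> \<Longrightarrow>
    (D ^^ N) (a \<otimes> b) = ([(N choose m)] \<cdot> \<one>) \<otimes> ((D ^^ m) a \<otimes> (D ^^ n) b)"
proof (induction N)
  case 0 then show ?case by (simp add: add.nat_pow_Suc)
next
  case (Suc N)
  show ?case
  proof (cases m)
    case 0
    then have "D a = \<zero>" using Suc.prems by simp
    then have "(D ^^ Suc N) (a \<otimes> b) = a \<otimes> (D ^^ Suc N) b"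
      by (rule der_pow_kill[OF D Suc.prems(2) _ Suc.prems(3)])
    then show ?thesis using 0 Suc.prems der_pow_cl[OF D] der_cl[OF D] by (simp add: add.nat_pow_Suc)
  next
    case (Suc m')
    show ?thesis
    proof (cases n)
      case 0
      then have "D b = \<zero>" using Suc.prems by simp
      then have "(D ^^ Suc N) (b \<otimes> a) = b \<otimes> (D ^^ Suc N) a"
        by (rule der_pow_kill[OF D Suc.prems(3) _ Suc.prems(2)])
      then have "(D ^^ Suc N) (a \<otimes> b) = b \<otimes> (D ^^ Suc N) a"
        using Suc.prems by (simp add: m_comm del: funpow.simps)
      then show ?thesis using 0 Suc.prems der_pow_cl[OF D] der_cl[OF D] by (simp add: add.nat_pow_Suc m_comm)
    next
      case (Suc n')
      have a: "a \<in> carrier R" and b: "b \<in> carrier R" using Suc.prems by auto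
      have Da: "D a \<in> carrier R" and Db: "D b \<in> carrier R" using a b der_cl[OF D] by auto
      have N: "N = m + n'" "N = m' + n" using Suc.prems(1) \<open>m = Suc m'\<close> Suc by auto
      have IH1: "(D ^^ N) (a \<otimes> D b) = ([(N choose m)] \<cdot> \<one>) \<otimes> ((D ^^ m) a \<otimes> (D ^^ n) b)"
        using Suc.IH[OF N(1)[symmetric] a Db Suc.prems(4)] Suc.prems(5) Suc
        by (simp add: der_pow_Suc'[symmetric] del: funpow.simps)
      have IH2: "(D ^^ N) (D a \<otimes> b) = ([(N choose m')] \<cdot> \<one>) \<otimes> ((D ^^ m) a \<otimes> (D ^^ n) b)"
        using Suc.IH[OF N(2)[symmetric] Da b _ Suc.prems(5)] Suc.prems(4) \<open>m = Suc m'\<close>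
        by (simp add: der_pow_Suc'[symmetric] del: funpow.simps)
      have "(D ^^ Suc N) (a \<otimes> b) = (D ^^ N) (a \<otimes> D b) \<oplus> (D ^^ N) (D a \<otimes> b)"
        using der_mult[OF D a b] a b Da Db by (simp add: der_pow_Suc' der_pow_add[OF D] del: funpow.simps)
      also have "\<dots> = ([(N choose m)] \<cdot> \<one> \<oplus> [(N choose m')] \<cdot> \<one>) \<otimes> ((D ^^ m) a \<otimes> (D ^^ n) b)"
        unfolding IH1 IH2 using a b der_pow_cl[OF D] by (simp add: l_distr)
      also have "[(N choose m)] \<cdot> \<one> \<oplus> [(N choose m')] \<cdot> \<one> = [(Suc N choose m)] \<cdot> \<one>"
        using \<open>m = Suc m'\<close> by (simp add: add.nat_pow_mult add.commute)
      finally show ?thesis .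
    qed
  qed
qed

end

context cring begin

lemma der_vanish:
  assumes D: "der R D" and a: "a \<in> carrier R" and b: "b \<in> carrier R"
    and ha: "(D ^^ Suc m) a = \<zero>" and hb: "(D ^^ Suc n) b = \<zero>"
  shows "(D ^^ Suc (m + n)) (a \<otimes> b) = \<zero>"
proof -
  have top: "(D ^^ (m + n)) (a \<otimes> b) = ([((m + n) choose m)] \<cdot> \<one>) \<otimes> ((D ^^ m) a \<otimes> (D ^^ n) b)"
    by (rule der_leibniz_top[OF D refl a b ha hb])
  have x: "(D ^^ m) a \<in> carrier R" and y: "(D ^^ n) b \<in> carrier R"
    using der_pow_cl[OF D] a b by auto
  have "(D ^^ Suc (m + n)) (a \<otimes> b) = D (([((m + n) choose m)] \<cdot> \<one>) \<otimes> ((D ^^ m) a \<otimes> (D ^^ n) b))"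
    using top by simp
  also have "\<dots> = ([((m + n) choose m)] \<cdot> \<one>) \<otimes> D ((D ^^ m) a \<otimes> (D ^^ n) b)"
  proof -
    have cc: "[((m + n) choose m)] \<cdot> \<one> \<in> carrier R" by simp
    have "(D ^^ 1) (([((m + n) choose m)] \<cdot> \<one>) \<otimes> ((D ^^ m) a \<otimes> (D ^^ n) b)) = ([((m + n) choose m)] \<cdot> \<one>) \<otimes> (D ^^ 1) ((D ^^ m) a \<otimes> (D ^^ n) b)"
      by (rule der_pow_kill[OF D cc der_natc[OF D] m_closed[OF x y]])
    then show ?thesis by simp
  qed
  also have "D ((D ^^ m) a \<otimes> (D ^^ n) b) = \<zero>"
    using der_mult[OF D x y] ha hb x y by simp
  finally show ?thesis by simp
qed

end

definition exact_deg :: "('x, 'n) ring_scheme \<Rightarrow> ('x \<Rightarrow> 'x) \<Rightarrow> nat \<Rightarrow> 'x \<Rightarrow> bool" where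
  "exact_deg A D d z \<longleftrightarrow> (D ^^ Suc d) z = \<zero>\<^bsub>A\<^esub> \<and> (D ^^ d) z \<noteq> \<zero>\<^bsub>A\<^esub>"

context domain begin

lemma exact_mult:
  assumes D: "der R D" and ch: "\<And>k::nat. k > 0 \<Longrightarrow> [k] \<cdot> \<one> \<noteq> \<zero>"
    and a: "a \<in> carrier R" and b: "b \<in> carrier R"
    and ea: "exact_deg R D m a" and eb: "exact_deg R D n b"
  shows "exact_deg R D (m + n) (a \<otimes> b)"
proof -
  have top: "(D ^^ (m + n)) (a \<otimes> b) = ([((m + n) choose m)] \<cdot> \<one>) \<otimes> ((D ^^ m) a \<otimes> (D ^^ n) b)"
    using ea eb unfolding exact_deg_def by (intro der_leibniz_top[OF D refl a b]) auto
  have x: "(D ^^ m) a \<in> carrier R" and y: "(D ^^ n) b \<in> carrier R"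
    using der_pow_cl[OF D] a b by auto
  have c: "[((m + n) choose m)] \<cdot> \<one> \<noteq> \<zero>" using ch by simp
  have "(D ^^ (m + n)) (a \<otimes> b) \<noteq> \<zero>"
    unfolding top using ea eb x y c unfolding exact_deg_def by (simp add: integral_iff)
  moreover have "(D ^^ Suc (m + n)) (a \<otimes> b) = \<zero>"
    using ea eb unfolding exact_deg_def by (intro der_vanish[OF D a b]) auto
  ultimately show ?thesis unfolding exact_deg_def by simp
qed

lemma exact_D:
  assumes D: "der R D" and z: "z \<in> carrier R" and e: "exact_deg R D (Suc d) z"
  shows "exact_deg R D d (D z)"
  using e unfolding exact_deg_def by (simp add: der_pow_Suc'[symmetric] del: funpow.simps)

lemma lnd_factor:
  assumes D: "der R D" and ch: "\<And>k::nat. k > 0 \<Longrightarrow> [k] \<cdot> \<one> \<noteq> \<zero>"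
    and lnd: "\<forall>b\<in>carrier R. \<exists>n. (D ^^ n) b = \<zero>"
    and v: "v \<in> carrier R" and v1: "D v \<noteq> \<zero>" and v2: "D (D v) = \<zero>"
    and q: "q \<in> carrier R"
    and N: "((\<lambda>x. q \<otimes> D x) ^^ N) v = \<zero>"
  shows "D q = \<zero>"
proof (rule ccontr)
  assume Dq: "D q \<noteq> \<zero>"
  define F where "F = (\<lambda>x. q \<otimes> D x)"
  have Fcl: "x \<in> carrier R \<Longrightarrow> F x \<in> carrier R" for x
    unfolding F_def using q der_cl[OF D] by simp
  have Fpcl: "(F ^^ k) v \<in> carrier R" for k
    by (induction k) (simp_all add: v Fcl)
  obtain n where n: "(D ^^ n) q = \<zero>" using lnd q by blast
  define n0 where "n0 = (LEAST n. (D ^^ n) q = \<zero>)"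
  have n0: "(D ^^ n0) q = \<zero>" unfolding n0_def by (rule LeastI[of _ n], rule n)
  have n0min: "k < n0 \<Longrightarrow> (D ^^ k) q \<noteq> \<zero>" for k unfolding n0_def using not_less_Least by blast
  have "n0 \<noteq> 0" using n0 Dq der_zero[OF D] by (cases n0) auto
  moreover have "n0 \<noteq> 1"
  proof
    assume "n0 = 1" then show False using n0 Dq by simp
  qed
  ultimately obtain e where e: "n0 = Suc e" "e \<ge> 1" by (cases n0) auto
  have eq: "exact_deg R D e q" unfolding exact_deg_def using n0 n0min e by auto
  have claim: "\<exists>d\<ge>1. exact_deg R D d ((F ^^ k) v)" for k
  proof (induction k)
    case 0 show ?case using v1 v2 by (intro exI[of _ 1]) (simp add: exact_deg_def)
  next
    case (Suc k)
    then obtain d where d: "d \<ge> 1" "exact_deg R D d ((F ^^ k) v)" by blast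
    then obtain d' where d': "d = Suc d'" by (cases d) auto
    have "exact_deg R D d' (D ((F ^^ k) v))" using exact_D[OF D Fpcl] d d' by simp
    then have "exact_deg R D (e + d') (q \<otimes> D ((F ^^ k) v))"
      by (intro exact_mult[OF D ch q der_cl[OF D Fpcl] eq])
    then show ?case using e by (intro exI[of _ "e + d'"]) (simp add: F_def)
  qed
  then obtain d where "exact_deg R D d ((F ^^ N) v)" by blast
  then show False using N der_pow_zero[OF D] unfolding F_def exact_deg_def by simp
qed

end


lemma (in factorial_domain) coprime_div:
  assumes r: "r \<in> carrier R" and s: "s \<in> carrier R" and b: "b \<in> carrier R" and c: "c \<in> carrier R"
    and r0: "r \<noteq> \<zero>" and s0: "s \<noteq> \<zero>"
    and cop: "\<forall>d\<in>carrier R. d divides\<^bsub>R\<^esub> r \<and> d divides\<^bsub>R\<^esub> s \<longrightarrow> d \<in> Units R"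
    and e: "r \<otimes> c = s \<otimes> b"
  shows "\<exists>a\<in>carrier R. b = a \<otimes> r"
proof (cases "b = \<zero>")
  case True then show ?thesis using r by (intro bexI[of _ \<zero>]) simp_all
next
  case False
  let ?G = "mult_of R"
  have rG: "r \<in> carrier ?G" and sG: "s \<in> carrier ?G" and bG: "b \<in> carrier ?G"
    using r s b r0 s0 False by auto
  have gc: "gcd_condition_monoid ?G" using factorial_monoid_axioms by (rule factorial_monoid.gcd_condition)
  define g where "g = somegcd ?G r s"
  have gG: "g \<in> carrier ?G" unfolding g_def using gcd_condition_monoid.gcd_closed[OF gc, OF rG sG] .
  have "g divides\<^bsub>?G\<^esub> r" "g divides\<^bsub>?G\<^esub> s"
    unfolding g_def using rG sG gcd_condition_monoid.gcd_divides_l[OF gc] gcd_condition_monoid.gcd_divides_r[OF gc] by blast+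
  then have "g \<in> Units R" using cop gG by auto
  then have gU: "g \<in> Units ?G" by simp
  have bsG: "b \<otimes> s \<in> carrier ?G" and brG: "b \<otimes> r \<in> carrier ?G"
    using bG sG rG by (simp_all add: integral_iff)
  have "b \<otimes> g \<sim>\<^bsub>?G\<^esub> somegcd ?G (b \<otimes> r) (b \<otimes> s)"
    using gcd_condition_monoid.gcd_mult[OF gc, OF rG sG bG] unfolding g_def by simp
  moreover have "r divides\<^bsub>?G\<^esub> somegcd ?G (b \<otimes> r) (b \<otimes> s)"
  proof (rule gcd_condition_monoid.gcd_divides[OF gc])
    show "r divides\<^bsub>?G\<^esub> b \<otimes> r"
      using rG bG by (simp add: mult_of.divides_prod_l)
    have "c \<noteq> \<zero>"
    proof
      assume "c = \<zero>" then have "s \<otimes> b = \<zero>" using e r by simp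
      then show False using integral_iff s b s0 False by simp
    qed
    then have cG: "c \<in> carrier ?G" using c by simp
    have "b \<otimes> s = r \<otimes> c" using e b s by (simp add: m_comm)
    then show "r divides\<^bsub>?G\<^esub> b \<otimes> s" using cG rG by (auto intro: dividesI)
  qed (use brG bsG rG in auto)
  ultimately have "r divides\<^bsub>?G\<^esub> b \<otimes> g"
    using mult_of.divides_cong_r[OF _ mult_of.associated_sym] rG by blast
  moreover have "b \<otimes> g \<sim>\<^bsub>?G\<^esub> b" using gU bG by (intro mult_of.associatedI2[OF gU]) simp_all
  ultimately have "r divides\<^bsub>?G\<^esub> b" using mult_of.divides_cong_r rG by blast
  then have "r divides\<^bsub>R\<^esub> b" by simp
  then obtain a where "a \<in> carrier R" "b = r \<otimes> a" unfolding factor_def by blast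
  then show ?thesis using r by (intro bexI[of _ a]) (simp_all add: m_comm)
qed




locale arsset =
  fixes R :: "'a ring" (structure) and r s :: 'a
  assumes Rdom: "domain R" and rc: "r \<in> carrier R" and sc: "s \<in> carrier R"
    and r0: "r \<noteq> \<zero>\<^bsub>R\<^esub>" and s0: "s \<noteq> \<zero>\<^bsub>R\<^esub>" and Adom: "domain (Ars R r s)"

sublocale arsset \<subseteq> R: domain R by (rule Rdom)
sublocale arsset \<subseteq> U1: UP_domain R "UP R" by unfold_locales
sublocale arsset \<subseteq> U2: UP_domain "UP R" "UP (UP R)"
  by (rule UP_domain.intro[OF UP_domain.UP_domain]) unfold_locales
sublocale arsset \<subseteq> A: domain "Ars R r s" by (rule Adom)

context arsset begin

abbreviation "AA \<equiv> Ars R r s"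
abbreviation "II \<equiv> PIdl\<^bsub>UP2 R\<^esub> (frs R r s)"
abbreviation "rh \<equiv> rho R r s"
abbreviation "uu \<equiv> uel R r s"
abbreviation "vv \<equiv> vel R r s"

lemma cst2_closed: "a \<in> carrier R \<Longrightarrow> cst2 R a \<in> carrier (UP2 R)"
  unfolding cst2_def by simp
lemma Uvar_closed: "Uvar R \<in> carrier (UP2 R)" unfolding Uvar_def by simp
lemma Vvar_closed: "Vvar R \<in> carrier (UP2 R)" unfolding Vvar_def by simp
lemma frs_closed: "frs R r s \<in> carrier (UP2 R)"
  unfolding frs_def using cst2_closed Uvar_closed Vvar_closed rc sc by simp

lemma II_ideal: "ideal II (UP2 R)"
  by (rule U2.cgenideal_ideal[OF frs_closed])

lemma resid_eq: "resid R r s = (+>\<^bsub>UP2 R\<^esub>) II"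
  by (rule ext) (simp add: resid_def)

lemma resid_hom: "resid R r s \<in> ring_hom (UP2 R) AA"
  unfolding resid_eq Ars_def by (rule ideal.rcos_ring_hom[OF II_ideal])

lemma cst2_hom: "cst2 R \<in> ring_hom R (UP2 R)"
proof -
  have "cst2 R = (\<lambda>a. monom (UP2 R) a 0) \<circ> (\<lambda>a. monom (UP R) a 0)"
    by (rule ext) (simp add: cst2_def)
  then show ?thesis using ring_hom_trans[OF U1.const_ring_hom U2.const_ring_hom] by simp
qed

lemma rho_hom: "rh \<in> ring_hom R AA"
proof -
  have "rh = resid R r s \<circ> cst2 R" by (rule ext) (simp add: rho_def)
  then show ?thesis using ring_hom_trans[OF cst2_hom resid_hom] by simp
qed

lemma resid_closed: "p \<in> carrier (UP2 R) \<Longrightarrow> resid R r s p \<in> carrier AA"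
  using resid_hom by (simp add: ring_hom_closed)

lemma rho_closed[simp]: "a \<in> carrier R \<Longrightarrow> rh a \<in> carrier AA"
  using rho_hom by (simp add: ring_hom_closed)
lemma u_closed[simp]: "uu \<in> carrier AA" unfolding uel_def by (rule resid_closed[OF Uvar_closed])
lemma v_closed[simp]: "vv \<in> carrier AA" unfolding vel_def by (rule resid_closed[OF Vvar_closed])

lemma resid_frs: "resid R r s (frs R r s) = \<zero>\<^bsub>AA\<^esub>"
  unfolding resid_eq Ars_def FactRing_def
  by (simp add: U2.a_rcos_zero[OF II_ideal U2.cgenideal_self[OF frs_closed]])

lemma resid_add: "p \<in> carrier (UP2 R) \<Longrightarrow> q \<in> carrier (UP2 R) \<Longrightarrow>
   resid R r s (p \<oplus>\<^bsub>UP2 R\<^esub> q) = resid R r s p \<oplus>\<^bsub>AA\<^esub> resid R r s q"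
  using resid_hom by (simp add: ring_hom_add)
lemma resid_mult: "p \<in> carrier (UP2 R) \<Longrightarrow> q \<in> carrier (UP2 R) \<Longrightarrow>
   resid R r s (p \<otimes>\<^bsub>UP2 R\<^esub> q) = resid R r s p \<otimes>\<^bsub>AA\<^esub> resid R r s q"
  using resid_hom by (simp add: ring_hom_mult)
lemma resid_one: "resid R r s \<one>\<^bsub>UP2 R\<^esub> = \<one>\<^bsub>AA\<^esub>"
  using resid_hom by (simp add: ring_hom_one)

lemma resid_minus: "p \<in> carrier (UP2 R) \<Longrightarrow> q \<in> carrier (UP2 R) \<Longrightarrow>
   resid R r s (p \<ominus>\<^bsub>UP2 R\<^esub> q) = resid R r s p \<ominus>\<^bsub>AA\<^esub> resid R r s q"
proof -
  assume p: "p \<in> carrier (UP2 R)" and q: "q \<in> carrier (UP2 R)"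
  interpret h: ring_hom_ring "UP2 R" AA "resid R r s"
    by (rule ring_hom_ringI2) (simp_all add: U2.ring_axioms A.ring_axioms resid_hom)
  show ?thesis using p q by (simp add: U2.minus_eq A.minus_eq)
qed

lemma basic_rel: "rh r \<otimes>\<^bsub>AA\<^esub> uu \<ominus>\<^bsub>AA\<^esub> rh s \<otimes>\<^bsub>AA\<^esub> vv = \<one>\<^bsub>AA\<^esub>"
proof -
  have "\<zero>\<^bsub>AA\<^esub> = resid R r s (frs R r s)" by (simp add: resid_frs)
  also have "\<dots> = rh r \<otimes>\<^bsub>AA\<^esub> uu \<ominus>\<^bsub>AA\<^esub> rh s \<otimes>\<^bsub>AA\<^esub> vv \<ominus>\<^bsub>AA\<^esub> \<one>\<^bsub>AA\<^esub>"
    unfolding frs_def using cst2_closed Uvar_closed Vvar_closed rc sc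
    by (simp add: resid_minus resid_mult resid_one rho_def uel_def vel_def)
  finally have "\<zero>\<^bsub>AA\<^esub> = rh r \<otimes>\<^bsub>AA\<^esub> uu \<ominus>\<^bsub>AA\<^esub> rh s \<otimes>\<^bsub>AA\<^esub> vv \<ominus>\<^bsub>AA\<^esub> \<one>\<^bsub>AA\<^esub>" .
  then show ?thesis using rc sc
    by (subst (asm) eq_commute) (simp add: A.r_right_minus_eq)
qed

lemma carrier_AA: "z \<in> carrier AA \<Longrightarrow> \<exists>p\<in>carrier (UP2 R). z = resid R r s p"
  unfolding Ars_def FactRing_def resid_def by (auto simp: A_RCOSETS_def')

lemma A_gen:
  assumes add: "\<And>x y. x \<in> carrier AA \<Longrightarrow> y \<in> carrier AA \<Longrightarrow> Q x \<Longrightarrow> Q y \<Longrightarrow> Q (x \<oplus>\<^bsub>AA\<^esub> y)"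
    and mul: "\<And>x y. x \<in> carrier AA \<Longrightarrow> y \<in> carrier AA \<Longrightarrow> Q x \<Longrightarrow> Q y \<Longrightarrow> Q (x \<otimes>\<^bsub>AA\<^esub> y)"
    and cst: "\<And>a. a \<in> carrier R \<Longrightarrow> Q (rh a)"
    and U: "Q uu" and V: "Q vv"
    and z: "z \<in> carrier AA"
  shows "Q z"
proof -
  obtain p where p: "p \<in> carrier (UP2 R)" "z = resid R r s p" using carrier_AA[OF z] by blast
  have h1: "resid R r s \<circ> (\<lambda>c. UnivPoly.monom (UP2 R) c 0) \<in> ring_hom (UP R) AA"
    by (rule ring_hom_trans[OF U2.const_ring_hom resid_hom])
  have inner: "Q (resid R r s (UnivPoly.monom (UP2 R) c 0))" if c: "c \<in> carrier (UP R)" for c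
    using U1.hom_gen[OF h1 A.ring_axioms add mul, of c] c cst U
    by (simp add: rho_def cst2_def uel_def Uvar_def)
  show ?thesis
    using U2.hom_gen[OF resid_hom A.ring_axioms add mul, of p] p inner V
    by (simp add: vel_def Vvar_def)
qed

lemma frs_coeff1: "UnivPoly.coeff (UP2 R) (frs R r s) 1 = \<ominus>\<^bsub>UP R\<^esub> UnivPoly.monom (UP R) s 0"
proof -
  have e1: "cst2 R r \<otimes>\<^bsub>UP2 R\<^esub> Uvar R = UnivPoly.monom (UP2 R) (UnivPoly.monom (UP R) r 0 \<otimes>\<^bsub>UP R\<^esub> UnivPoly.monom (UP R) \<one> 1) 0"
    unfolding cst2_def Uvar_def using rc
    by (subst U2.monom_mult[symmetric]) simp_all
  have e2: "cst2 R s \<otimes>\<^bsub>UP2 R\<^esub> Vvar R = UnivPoly.monom (UP2 R) (UnivPoly.monom (UP R) s 0) 1"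
    unfolding cst2_def Vvar_def using sc
    by (subst U2.monom_mult[symmetric]) simp_all
  show ?thesis
    unfolding frs_def e1 e2 using rc sc by (simp add: U1.minus_eq)
qed

lemma frs_deg: "1 \<le> deg (UP R) (frs R r s)"
proof (rule U2.deg_belowI[OF _ frs_closed])
  have "UnivPoly.monom (UP R) s 0 \<noteq> \<zero>\<^bsub>UP R\<^esub>"
  proof
    assume "UnivPoly.monom (UP R) s 0 = \<zero>\<^bsub>UP R\<^esub>"
    then have "UnivPoly.coeff (UP R) (UnivPoly.monom (UP R) s 0) 0 = \<zero>" by simp
    then show False using s0 sc by simp
  qed
  then show "UnivPoly.coeff (UP2 R) (frs R r s) 1 \<noteq> \<zero>\<^bsub>UP R\<^esub>"
    unfolding frs_coeff1 using sc
    by (metis U1.P.add.inv_eq_1_iff U1.monom_closed)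
qed

lemma rho_zero_imp: assumes a: "a \<in> carrier R" and z: "rh a = \<zero>\<^bsub>AA\<^esub>" shows "a = \<zero>"
proof -
  have "II +>\<^bsub>UP2 R\<^esub> cst2 R a = II" using z unfolding rho_def resid_def Ars_def FactRing_def by simp
  then have "cst2 R a \<in> II" using ideal.rcos_const_imp_mem[OF II_ideal cst2_closed[OF a]] by simp
  then obtain g where g: "g \<in> carrier (UP2 R)" "cst2 R a = g \<otimes>\<^bsub>UP2 R\<^esub> frs R r s"
    unfolding cgenideal_def by blast
  have "g = \<zero>\<^bsub>UP2 R\<^esub>"
  proof (rule ccontr)
    assume gn: "g \<noteq> \<zero>\<^bsub>UP2 R\<^esub>"
    have fn: "frs R r s \<noteq> \<zero>\<^bsub>UP2 R\<^esub>" using frs_deg by auto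
    have "deg (UP R) (g \<otimes>\<^bsub>UP2 R\<^esub> frs R r s) = deg (UP R) g + deg (UP R) (frs R r s)"
      using gn fn g frs_closed by simp
    moreover have "deg (UP R) (cst2 R a) = 0" unfolding cst2_def using a by simp
    ultimately show False using g(2) frs_deg by simp
  qed
  then have "cst2 R a = \<zero>\<^bsub>UP2 R\<^esub>" using g frs_closed by simp
  then have "UnivPoly.coeff (UP R) (UnivPoly.coeff (UP2 R) (cst2 R a) 0) 0 = \<zero>" by simp
  then show ?thesis using a unfolding cst2_def by simp
qed

lemma rho_inj: "a \<in> carrier R \<Longrightarrow> b \<in> carrier R \<Longrightarrow> rh a = rh b \<Longrightarrow> a = b"
proof -
  assume a: "a \<in> carrier R" and b: "b \<in> carrier R" and e: "rh a = rh b"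
  have "rh (a \<ominus> b) = rh a \<ominus>\<^bsub>AA\<^esub> rh b"
  proof -
    interpret h: ring_hom_ring R AA rh
      by (rule ring_hom_ringI2) (simp_all add: R.ring_axioms A.ring_axioms rho_hom)
    show ?thesis using a b by (simp add: R.minus_eq A.minus_eq)
  qed
  then have "rh (a \<ominus> b) = \<zero>\<^bsub>AA\<^esub>" using e a b by simp
  then have "a \<ominus> b = \<zero>" using a b by (intro rho_zero_imp) simp_all
  then show "a = b" using a b by simp
qed

lemma rho_r_nz: "rh r \<noteq> \<zero>\<^bsub>AA\<^esub>" using rho_zero_imp[OF rc] r0 by blast
lemma rho_s_nz: "rh s \<noteq> \<zero>\<^bsub>AA\<^esub>" using rho_zero_imp[OF sc] s0 by blast

lemma A_cring: "cring AA" by (rule A.cring_axioms)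
lemma DN_cr: "cring (DN AA)" by (rule A.DN_cring)

definition h0 where "h0 a = (rh a, \<zero>\<^bsub>AA\<^esub>)"

lemma h0_hom: "h0 \<in> ring_hom R (DN AA)"
  using rho_hom unfolding h0_def
  by (intro ring_hom_memI) (auto simp: DN_simps ring_hom_closed ring_hom_mult ring_hom_add ring_hom_one)

lemma uS_closed: "(uu, rh s) \<in> carrier (DN AA)" using sc by (simp add: DN_simps)
lemma vR_closed: "(vv, rh r) \<in> carrier (DN AA)" using rc by (simp add: DN_simps)

interpretation E1: UP_pre_univ_prop R "DN AA" h0 "UP R"
  by (intro UP_pre_univ_prop.intro UnivPoly.ring_hom_cringI R.cring_axioms DN_cr h0_hom U1.UP_cring_axioms)

definition phi1 where "phi1 = eval R (DN AA) h0 (uu, rh s)"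

lemma phi1_hom: "phi1 \<in> ring_hom (UP R) (DN AA)"
  unfolding phi1_def by (rule E1.eval_ring_hom[OF uS_closed])

interpretation E2: UP_pre_univ_prop "UP R" "DN AA" phi1 "UP2 R"
  by (intro UP_pre_univ_prop.intro UnivPoly.ring_hom_cringI U1.UP_cring DN_cr phi1_hom U2.UP_cring_axioms)

definition phi where "phi = eval (UP R) (DN AA) phi1 (vv, rh r)"

lemma phi_hom: "phi \<in> ring_hom (UP2 R) (DN AA)"
  unfolding phi_def by (rule E2.eval_ring_hom[OF vR_closed])

lemma phi_cst2: "a \<in> carrier R \<Longrightarrow> phi (cst2 R a) = (rh a, \<zero>\<^bsub>AA\<^esub>)"
  unfolding phi_def cst2_def
  using E2.eval_const[OF vR_closed] E1.eval_const[OF uS_closed]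
  by (simp add: phi1_def h0_def)

lemma phi_U: "phi (Uvar R) = (uu, rh s)"
  unfolding phi_def Uvar_def
  using E2.eval_const[OF vR_closed] E1.eval_monom1[OF uS_closed]
  by (simp add: phi1_def)

lemma phi_V: "phi (Vvar R) = (vv, rh r)"
  unfolding phi_def Vvar_def
  using E2.eval_monom1[OF vR_closed] by simp

lemma phi_closed: "p \<in> carrier (UP2 R) \<Longrightarrow> phi p \<in> carrier (DN AA)"
  using phi_hom by (simp add: ring_hom_closed)

lemma phi_frs: "phi (frs R r s) = \<zero>\<^bsub>DN AA\<^esub>"
proof -
  interpret h: ring_hom_ring "UP2 R" "DN AA" phi
    by (rule ring_hom_ringI2) (simp_all add: U2.ring_axioms cring.axioms(1)[OF DN_cr] phi_hom)
  have "phi (frs R r s) = (rh r \<otimes>\<^bsub>AA\<^esub> uu \<ominus>\<^bsub>AA\<^esub> rh s \<otimes>\<^bsub>AA\<^esub> vv \<ominus>\<^bsub>AA\<^esub> \<one>\<^bsub>AA\<^esub>,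
      rh r \<otimes>\<^bsub>AA\<^esub> rh s \<ominus>\<^bsub>AA\<^esub> rh s \<otimes>\<^bsub>AA\<^esub> rh r \<ominus>\<^bsub>AA\<^esub> \<zero>\<^bsub>AA\<^esub>)"
    unfolding frs_def using cst2_closed Uvar_closed Vvar_closed rc sc
    by (simp add: h.hom_minus2 phi_cst2 phi_U phi_V A.DN_minus DN_simps) 
  also have "\<dots> = \<zero>\<^bsub>DN AA\<^esub>"
    using basic_rel rc sc by (simp add: DN_simps A.m_comm)
  finally show ?thesis .
qed

interpretation F1: UP_pre_univ_prop R AA rh "UP R"
  by (intro UP_pre_univ_prop.intro UnivPoly.ring_hom_cringI R.cring_axioms A_cring rho_hom U1.UP_cring_axioms)

lemma fst_phi1: assumes c: "c \<in> carrier (UP R)"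
  shows "fst (phi1 c) = resid R r s (UnivPoly.monom (UP2 R) c 0)"
proof -
  have hPhi: "fst \<circ> phi1 \<in> ring_hom (UP R) AA"
    by (rule ring_hom_trans[OF phi1_hom A.fst_DN_hom])
  have hPsi: "resid R r s \<circ> (\<lambda>c. UnivPoly.monom (UP2 R) c 0) \<in> ring_hom (UP R) AA"
    by (rule ring_hom_trans[OF U2.const_ring_hom resid_hom])
  have "(fst \<circ> phi1) c = (resid R r s \<circ> (\<lambda>c. UnivPoly.monom (UP2 R) c 0)) c"
  proof (rule F1.UP_hom_unique[OF _ _ _ _ _ _ c u_closed])
    show "ring_hom_cring (UP R) AA (fst \<circ> phi1)"
      by (rule UnivPoly.ring_hom_cringI[OF U1.UP_cring A_cring hPhi])
    show "ring_hom_cring (UP R) AA (resid R r s \<circ> (\<lambda>c. UnivPoly.monom (UP2 R) c 0))"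
      by (rule UnivPoly.ring_hom_cringI[OF U1.UP_cring A_cring hPsi])
    show "(fst \<circ> phi1) (UnivPoly.monom (UP R) \<one> (Suc 0)) = uu"
      using E1.eval_monom1[OF uS_closed] by (simp add: phi1_def)
    show "(resid R r s \<circ> (\<lambda>c. UnivPoly.monom (UP2 R) c 0)) (UnivPoly.monom (UP R) \<one> (Suc 0)) = uu"
      by (simp add: uel_def Uvar_def)
    fix a assume a: "a \<in> carrier R"
    show "(fst \<circ> phi1) (UnivPoly.monom (UP R) a 0) = rh a"
      using E1.eval_const[OF uS_closed a] by (simp add: phi1_def h0_def)
    show "(resid R r s \<circ> (\<lambda>c. UnivPoly.monom (UP2 R) c 0)) (UnivPoly.monom (UP R) a 0) = rh a"
      by (simp add: rho_def cst2_def)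
  qed
  then show ?thesis by simp
qed

interpretation F2: UP_pre_univ_prop "UP R" AA "fst \<circ> phi1" "UP2 R"
  by (intro UP_pre_univ_prop.intro UnivPoly.ring_hom_cringI U1.UP_cring A_cring
        ring_hom_trans[OF phi1_hom A.fst_DN_hom] U2.UP_cring_axioms)

lemma fst_phi: assumes p: "p \<in> carrier (UP2 R)"
  shows "fst (phi p) = resid R r s p"
proof -
  have hPhi: "fst \<circ> phi \<in> ring_hom (UP2 R) AA"
    by (rule ring_hom_trans[OF phi_hom A.fst_DN_hom])
  have "(fst \<circ> phi) p = resid R r s p"
  proof (rule F2.UP_hom_unique[OF _ _ _ _ _ _ p v_closed])
    show "ring_hom_cring (UP2 R) AA (fst \<circ> phi)"
      by (rule UnivPoly.ring_hom_cringI[OF U2.UP_cring A_cring hPhi])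
    show "ring_hom_cring (UP2 R) AA (resid R r s)"
      by (rule UnivPoly.ring_hom_cringI[OF U2.UP_cring A_cring resid_hom])
    show "(fst \<circ> phi) (UnivPoly.monom (UP2 R) \<one>\<^bsub>UP R\<^esub> (Suc 0)) = vv"
      using E2.eval_monom1[OF vR_closed] by (simp add: phi_def)
    show "resid R r s (UnivPoly.monom (UP2 R) \<one>\<^bsub>UP R\<^esub> (Suc 0)) = vv"
      by (simp add: vel_def Vvar_def)
    fix c assume c: "c \<in> carrier (UP R)"
    show "(fst \<circ> phi) (UnivPoly.monom (UP2 R) c 0) = (fst \<circ> phi1) c"
      using E2.eval_const[OF vR_closed c] by (simp add: phi_def)
    show "resid R r s (UnivPoly.monom (UP2 R) c 0) = (fst \<circ> phi1) c"
      using fst_phi1[OF c] by simp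
  qed
  then show ?thesis by simp
qed

definition Eop where "Eop z = snd (phi (SOME p. p \<in> carrier (UP2 R) \<and> z = resid R r s p))"

lemma Eop_resid: assumes p: "p \<in> carrier (UP2 R)" shows "Eop (resid R r s p) = snd (phi p)"
proof -
  interpret D: cring "DN AA" by (rule DN_cr)
  interpret h: ring_hom_ring "UP2 R" "DN AA" phi
    by (rule ring_hom_ringI2) (simp_all add: U2.ring_axioms cring.axioms(1)[OF DN_cr] phi_hom)
  define p' where "p' = (SOME p'. p' \<in> carrier (UP2 R) \<and> resid R r s p = resid R r s p')"
  have p': "p' \<in> carrier (UP2 R)" "resid R r s p = resid R r s p'"
    unfolding p'_def using someI[of "\<lambda>p'. p' \<in> carrier (UP2 R) \<and> resid R r s p = resid R r s p'" p] p by auto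
  have "resid R r s (p' \<ominus>\<^bsub>UP2 R\<^esub> p) = \<zero>\<^bsub>AA\<^esub>"
    using p p' by (simp add: resid_minus resid_closed)
  then have "II +>\<^bsub>UP2 R\<^esub> (p' \<ominus>\<^bsub>UP2 R\<^esub> p) = II"
    unfolding resid_def Ars_def FactRing_def by simp
  then have "p' \<ominus>\<^bsub>UP2 R\<^esub> p \<in> II"
    using ideal.rcos_const_imp_mem[OF II_ideal] p p' by simp
  then obtain g where g: "g \<in> carrier (UP2 R)" "p' \<ominus>\<^bsub>UP2 R\<^esub> p = g \<otimes>\<^bsub>UP2 R\<^esub> frs R r s"
    unfolding cgenideal_def by blast
  have "phi p' \<ominus>\<^bsub>DN AA\<^esub> phi p = phi g \<otimes>\<^bsub>DN AA\<^esub> phi (frs R r s)"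
    using g p p' frs_closed by (simp add: h.hom_minus2[symmetric])
  also have "\<dots> = \<zero>\<^bsub>DN AA\<^esub>" using phi_frs g phi_closed by simp
  finally have "phi p' = phi p" using p p' phi_closed by simp
  then show ?thesis unfolding Eop_def p'_def[symmetric] by simp
qed

lemma Eop_closed: "z \<in> carrier AA \<Longrightarrow> Eop z \<in> carrier AA"
  using carrier_AA Eop_resid phi_closed by (fastforce simp: DN_simps mem_Times_iff)

lemma Eop_add: "x \<in> carrier AA \<Longrightarrow> y \<in> carrier AA \<Longrightarrow> Eop (x \<oplus>\<^bsub>AA\<^esub> y) = Eop x \<oplus>\<^bsub>AA\<^esub> Eop y"
proof -
  assume x: "x \<in> carrier AA" and y: "y \<in> carrier AA"
  obtain p q where pq: "p \<in> carrier (UP2 R)" "q \<in> carrier (UP2 R)" "x = resid R r s p" "y = resid R r s q"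
    using carrier_AA[OF x] carrier_AA[OF y] by blast
  show ?thesis using pq phi_hom
    by (simp add: resid_add[symmetric] Eop_resid ring_hom_add DN_simps)
qed

lemma Eop_mult: "x \<in> carrier AA \<Longrightarrow> y \<in> carrier AA \<Longrightarrow>
    Eop (x \<otimes>\<^bsub>AA\<^esub> y) = x \<otimes>\<^bsub>AA\<^esub> Eop y \<oplus>\<^bsub>AA\<^esub> Eop x \<otimes>\<^bsub>AA\<^esub> y"
proof -
  assume x: "x \<in> carrier AA" and y: "y \<in> carrier AA"
  obtain p q where pq: "p \<in> carrier (UP2 R)" "q \<in> carrier (UP2 R)" "x = resid R r s p" "y = resid R r s q"
    using carrier_AA[OF x] carrier_AA[OF y] by blast
  show ?thesis using pq phi_hom
    by (simp add: resid_mult[symmetric] Eop_resid ring_hom_mult DN_simps fst_phi)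
qed

lemma Eop_rho: "a \<in> carrier R \<Longrightarrow> Eop (rh a) = \<zero>\<^bsub>AA\<^esub>"
  unfolding rho_def by (simp add: Eop_resid cst2_closed phi_cst2)

lemma Eop_u: "Eop uu = rh s" unfolding uel_def by (simp add: Eop_resid Uvar_closed phi_U)
lemma Eop_v: "Eop vv = rh r" unfolding vel_def by (simp add: Eop_resid Vvar_closed phi_V)

lemma Eop_lin: "lin_derivation AA (carrier R) rh Eop"
  unfolding lin_derivation_def
proof (intro conjI ballI)
  show "Eop \<in> carrier AA \<rightarrow> carrier AA" using Eop_closed by blast
  fix c x assume c: "c \<in> carrier R" and x: "x \<in> carrier AA"
  show "Eop (rh c \<otimes>\<^bsub>AA\<^esub> x) = rh c \<otimes>\<^bsub>AA\<^esub> Eop x"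
    using c x by (simp add: Eop_mult Eop_rho Eop_closed)
qed (simp_all add: Eop_add Eop_mult)


end

locale arsmain = arsset +
  fixes iota :: "complex \<Rightarrow> 'a"
  assumes Rfact: "factorial_domain R"
    and iota: "iota \<in> ring_hom complex_ring R"
    and cop: "\<forall>d\<in>carrier R. d divides\<^bsub>R\<^esub> r \<and> d divides\<^bsub>R\<^esub> s \<longrightarrow> d \<in> Units R"
    and MLh: "makar_limanov (Ars R r s) (rho R r s \<circ> iota) = rho R r s ` carrier R"
begin

abbreviation "cemb \<equiv> rho R r s \<circ> iota"

lemma cemb_hom: "cemb \<in> ring_hom complex_ring AA"
  by (rule ring_hom_trans[OF iota rho_hom])

lemma iota_closed: "iota c \<in> carrier R"
  using iota by (auto simp: ring_hom_def complex_ring_def)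

lemma cemb_nat: "cemb (of_nat k) = [k] \<cdot>\<^bsub>AA\<^esub> \<one>\<^bsub>AA\<^esub>"
proof (induction k)
  case 0
  have cl: "cemb 0 \<in> carrier AA" using ring_hom_closed[OF cemb_hom, of 0] by (simp add: complex_ring_def)
  have "cemb 0 \<oplus>\<^bsub>AA\<^esub> cemb 0 = cemb 0"
    using ring_hom_add[OF cemb_hom, of 0 0] by (simp add: complex_ring_def)
  then have "cemb 0 = \<zero>\<^bsub>AA\<^esub>" using cl by (metis A.add.l_cancel_one' A.zero_closed)
  then show ?case by simp
next
  case (Suc k)
  have "cemb (of_nat (Suc k)) = cemb (of_nat k \<oplus>\<^bsub>complex_ring\<^esub> \<one>\<^bsub>complex_ring\<^esub>)"
    by (simp add: complex_ring_def add.commute)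
  also have "\<dots> = cemb (of_nat k) \<oplus>\<^bsub>AA\<^esub> \<one>\<^bsub>AA\<^esub>"
    using ring_hom_add[OF cemb_hom] ring_hom_one[OF cemb_hom] by (simp add: complex_ring_def)
  finally show ?case using Suc by (simp add: A.add.nat_pow_Suc)
qed

lemma char0: "k > 0 \<Longrightarrow> [(k::nat)] \<cdot>\<^bsub>AA\<^esub> \<one>\<^bsub>AA\<^esub> \<noteq> \<zero>\<^bsub>AA\<^esub>"
proof
  assume k: "k > 0" and z: "[k] \<cdot>\<^bsub>AA\<^esub> \<one>\<^bsub>AA\<^esub> = \<zero>\<^bsub>AA\<^esub>"
  have m: "cemb x \<otimes>\<^bsub>AA\<^esub> cemb y = cemb (x * y)" for x y
    using ring_hom_mult[OF cemb_hom, of x y] by (simp add: complex_ring_def)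
  have o: "cemb 1 = \<one>\<^bsub>AA\<^esub>" using ring_hom_one[OF cemb_hom] by (simp add: complex_ring_def)
  have "\<one>\<^bsub>AA\<^esub> = cemb (of_nat k * (1 / of_nat k))" using k o by simp
  also have "\<dots> = cemb (of_nat k) \<otimes>\<^bsub>AA\<^esub> cemb (1 / of_nat k)" by (rule m[symmetric])
  also have "\<dots> = \<zero>\<^bsub>AA\<^esub>" using z cemb_nat iota_closed by simp
  finally show False by simp
qed

lemma mlkill: "is_LND AA cemb D \<Longrightarrow> a \<in> carrier R \<Longrightarrow> D (rh a) = \<zero>\<^bsub>AA\<^esub>"
  using MLh unfolding makar_limanov_def by blast

lemma LND_der: "is_LND AA cemb D \<Longrightarrow> der AA D"
  unfolding is_LND_def by (blast intro: lin_der)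

lemma LND_nil: "is_LND AA cemb D \<Longrightarrow> \<forall>b\<in>carrier AA. \<exists>n. (D ^^ n) b = \<zero>\<^bsub>AA\<^esub>"
  unfolding is_LND_def by blast

lemma rel2: "rh r \<otimes>\<^bsub>AA\<^esub> uu = \<one>\<^bsub>AA\<^esub> \<oplus>\<^bsub>AA\<^esub> rh s \<otimes>\<^bsub>AA\<^esub> vv"
proof -
  have "rh r \<otimes>\<^bsub>AA\<^esub> uu = (rh r \<otimes>\<^bsub>AA\<^esub> uu \<ominus>\<^bsub>AA\<^esub> rh s \<otimes>\<^bsub>AA\<^esub> vv) \<oplus>\<^bsub>AA\<^esub> rh s \<otimes>\<^bsub>AA\<^esub> vv"
    using rc sc by (simp add: A.minus_eq A.a_assoc A.l_neg)
  then show ?thesis using basic_rel by simp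
qed

context
  fixes E assumes Elin: "lin_derivation AA (carrier R) rh E" and Eu: "E uu = rh s" and Ev: "E vv = rh r"
begin

lemma Eder: "der AA E" by (rule lin_der[OF Elin])

lemma E_rho: "a \<in> carrier R \<Longrightarrow> E (rh a) = \<zero>\<^bsub>AA\<^esub>"
proof -
  assume a: "a \<in> carrier R"
  have "E (rh a \<otimes>\<^bsub>AA\<^esub> \<one>\<^bsub>AA\<^esub>) = rh a \<otimes>\<^bsub>AA\<^esub> E \<one>\<^bsub>AA\<^esub>"
    using Elin a unfolding lin_derivation_def by blast
  then show ?thesis using a A.der_one[OF Eder] by simp
qed

lemma E_lin: "a \<in> carrier R \<Longrightarrow> x \<in> carrier AA \<Longrightarrow> E (rh a \<otimes>\<^bsub>AA\<^esub> x) = rh a \<otimes>\<^bsub>AA\<^esub> E x"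
  using Elin unfolding lin_derivation_def by blast

lemma nil_mono: "der AA D \<Longrightarrow> (D ^^ n) x = \<zero>\<^bsub>AA\<^esub> \<Longrightarrow> (D ^^ (k + n)) x = \<zero>\<^bsub>AA\<^esub>"
  by (simp add: funpow_add A.der_pow_zero)

lemma E_nil: "x \<in> carrier AA \<Longrightarrow> \<exists>n. (E ^^ n) x = \<zero>\<^bsub>AA\<^esub>"
proof (rule A_gen[where Q = "\<lambda>x. \<exists>n. (E ^^ n) x = \<zero>\<^bsub>AA\<^esub>"])
  fix x y assume x: "x \<in> carrier AA" and y: "y \<in> carrier AA"
  assume "\<exists>n. (E ^^ n) x = \<zero>\<^bsub>AA\<^esub>" "\<exists>n. (E ^^ n) y = \<zero>\<^bsub>AA\<^esub>"
  then obtain n m where n: "(E ^^ n) x = \<zero>\<^bsub>AA\<^esub>" and m: "(E ^^ m) y = \<zero>\<^bsub>AA\<^esub>" by blast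
  have n': "(E ^^ (m + n)) x = \<zero>\<^bsub>AA\<^esub>" by (rule nil_mono[OF Eder n])
  have m': "(E ^^ (n + m)) y = \<zero>\<^bsub>AA\<^esub>" by (rule nil_mono[OF Eder m])
  show "\<exists>n. (E ^^ n) (x \<oplus>\<^bsub>AA\<^esub> y) = \<zero>\<^bsub>AA\<^esub>"
    using n' m' x y by (intro exI[of _ "n + m"]) (simp add: A.der_pow_add[OF Eder] add.commute)
  have n1: "(E ^^ Suc n) x = \<zero>\<^bsub>AA\<^esub>" using nil_mono[OF Eder n, of 1] by simp
  have m1: "(E ^^ Suc m) y = \<zero>\<^bsub>AA\<^esub>" using nil_mono[OF Eder m, of 1] by simp
  show "\<exists>n. (E ^^ n) (x \<otimes>\<^bsub>AA\<^esub> y) = \<zero>\<^bsub>AA\<^esub>"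
    using A.der_vanish[OF Eder x y n1 m1] by blast
next
  fix a assume a: "a \<in> carrier R"
  show "\<exists>n. (E ^^ n) (rh a) = \<zero>\<^bsub>AA\<^esub>" using E_rho[OF a] by (intro exI[of _ 1]) simp
next
  show "\<exists>n. (E ^^ n) uu = \<zero>\<^bsub>AA\<^esub>" using E_rho[OF sc] Eu by (intro exI[of _ 2]) (simp add: numeral_2_eq_2)
next
  show "\<exists>n. (E ^^ n) vv = \<zero>\<^bsub>AA\<^esub>" using E_rho[OF rc] Ev by (intro exI[of _ 2]) (simp add: numeral_2_eq_2)
qed

lemma key_rel:
  assumes D: "der AA D" and Dk: "\<And>a. a \<in> carrier R \<Longrightarrow> D (rh a) = \<zero>\<^bsub>AA\<^esub>"
    and x: "x \<in> carrier AA"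
  shows "D vv \<otimes>\<^bsub>AA\<^esub> E x = rh r \<otimes>\<^bsub>AA\<^esub> D x"
proof -
  let ?q = "D vv"
  let ?rr = "rh r"
  have q: "?q \<in> carrier AA" using A.der_cl[OF D v_closed] .
  have rr: "?rr \<in> carrier AA" using rc by simp
  note Ecl = A.der_cl[OF Eder] and Dcl = A.der_cl[OF D]
  show ?thesis
  proof (rule A_gen[where Q = "\<lambda>x. ?q \<otimes>\<^bsub>AA\<^esub> E x = ?rr \<otimes>\<^bsub>AA\<^esub> D x", OF _ _ _ _ _ x])
    fix x y assume x: "x \<in> carrier AA" and y: "y \<in> carrier AA"
      and hx: "?q \<otimes>\<^bsub>AA\<^esub> E x = ?rr \<otimes>\<^bsub>AA\<^esub> D x" and hy: "?q \<otimes>\<^bsub>AA\<^esub> E y = ?rr \<otimes>\<^bsub>AA\<^esub> D y"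
    show "?q \<otimes>\<^bsub>AA\<^esub> E (x \<oplus>\<^bsub>AA\<^esub> y) = ?rr \<otimes>\<^bsub>AA\<^esub> D (x \<oplus>\<^bsub>AA\<^esub> y)"
      using x y hx hy q rr Ecl Dcl by (simp add: A.der_add[OF Eder] A.der_add[OF D] A.r_distr)
    have "?q \<otimes>\<^bsub>AA\<^esub> E (x \<otimes>\<^bsub>AA\<^esub> y) = ?q \<otimes>\<^bsub>AA\<^esub> (x \<otimes>\<^bsub>AA\<^esub> E y) \<oplus>\<^bsub>AA\<^esub> ?q \<otimes>\<^bsub>AA\<^esub> (E x \<otimes>\<^bsub>AA\<^esub> y)"
      using x y q Ecl by (simp add: A.der_mult[OF Eder] A.r_distr)
    also have "\<dots> = x \<otimes>\<^bsub>AA\<^esub> (?q \<otimes>\<^bsub>AA\<^esub> E y) \<oplus>\<^bsub>AA\<^esub> (?q \<otimes>\<^bsub>AA\<^esub> E x) \<otimes>\<^bsub>AA\<^esub> y"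
      using x y q Ecl by (simp add: A.m_lcomm A.m_assoc)
    also have "\<dots> = x \<otimes>\<^bsub>AA\<^esub> (?rr \<otimes>\<^bsub>AA\<^esub> D y) \<oplus>\<^bsub>AA\<^esub> (?rr \<otimes>\<^bsub>AA\<^esub> D x) \<otimes>\<^bsub>AA\<^esub> y"
      by (simp only: hx hy)
    also have "\<dots> = ?rr \<otimes>\<^bsub>AA\<^esub> (x \<otimes>\<^bsub>AA\<^esub> D y \<oplus>\<^bsub>AA\<^esub> D x \<otimes>\<^bsub>AA\<^esub> y)"
      using x y rr Dcl by (simp add: A.m_lcomm A.m_assoc A.r_distr)
    also have "\<dots> = ?rr \<otimes>\<^bsub>AA\<^esub> D (x \<otimes>\<^bsub>AA\<^esub> y)"
      using x y by (simp add: A.der_mult[OF D])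
    finally show "?q \<otimes>\<^bsub>AA\<^esub> E (x \<otimes>\<^bsub>AA\<^esub> y) = ?rr \<otimes>\<^bsub>AA\<^esub> D (x \<otimes>\<^bsub>AA\<^esub> y)" .
  next
    fix a assume a: "a \<in> carrier R"
    show "?q \<otimes>\<^bsub>AA\<^esub> E (rh a) = ?rr \<otimes>\<^bsub>AA\<^esub> D (rh a)"
      using a E_rho Dk q rr by simp
  next
    have "D (?rr \<otimes>\<^bsub>AA\<^esub> uu) = D (\<one>\<^bsub>AA\<^esub> \<oplus>\<^bsub>AA\<^esub> rh s \<otimes>\<^bsub>AA\<^esub> vv)"
      using rel2 by simp
    then have "?rr \<otimes>\<^bsub>AA\<^esub> D uu = rh s \<otimes>\<^bsub>AA\<^esub> ?q"
      using rc sc Dk[OF rc] Dk[OF sc] A.der_one[OF D] Dcl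
      by (simp add: A.der_mult[OF D] A.der_add[OF D])
    then show "?q \<otimes>\<^bsub>AA\<^esub> E uu = ?rr \<otimes>\<^bsub>AA\<^esub> D uu"
      using Eu q sc by (simp add: A.m_comm)
  next
    show "?q \<otimes>\<^bsub>AA\<^esub> E vv = ?rr \<otimes>\<^bsub>AA\<^esub> D vv"
      using Ev q rr by (simp add: A.m_comm)
  qed
qed

lemma Fpow:
  assumes D: "der AA D" and Dk: "\<And>a. a \<in> carrier R \<Longrightarrow> D (rh a) = \<zero>\<^bsub>AA\<^esub>"
    and x: "x \<in> carrier AA"
  shows "((\<lambda>y. D vv \<otimes>\<^bsub>AA\<^esub> E y) ^^ k) x = (rh r [^]\<^bsub>AA\<^esub> k) \<otimes>\<^bsub>AA\<^esub> (D ^^ k) x"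
proof (induction k)
  case 0 then show ?case using x by simp
next
  case (Suc k)
  have rk: "rh r [^]\<^bsub>AA\<^esub> k = rh (r [^] k)"
    using ring_hom_ring.hom_nat_pow[OF ring_hom_ringI2[OF R.ring_axioms A.ring_axioms rho_hom] rc] by simp
  have rkc: "rh r [^]\<^bsub>AA\<^esub> k \<in> carrier AA" using rc by simp
  have y: "(D ^^ k) x \<in> carrier AA" using A.der_pow_cl[OF D x] .
  have Dy: "D ((D ^^ k) x) \<in> carrier AA" using A.der_cl[OF D y] .
  have "((\<lambda>y. D vv \<otimes>\<^bsub>AA\<^esub> E y) ^^ Suc k) x = D vv \<otimes>\<^bsub>AA\<^esub> E ((rh r [^]\<^bsub>AA\<^esub> k) \<otimes>\<^bsub>AA\<^esub> (D ^^ k) x)"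
    using Suc by simp
  also have "\<dots> = rh r \<otimes>\<^bsub>AA\<^esub> D ((rh r [^]\<^bsub>AA\<^esub> k) \<otimes>\<^bsub>AA\<^esub> (D ^^ k) x)"
    using key_rel[OF D Dk] rkc y by simp
  also have "D ((rh r [^]\<^bsub>AA\<^esub> k) \<otimes>\<^bsub>AA\<^esub> (D ^^ k) x) = (rh r [^]\<^bsub>AA\<^esub> k) \<otimes>\<^bsub>AA\<^esub> D ((D ^^ k) x)"
    using A.der_mult[OF D rkc y] Dk[of "r [^] k"] rc rk y Dy rkc by simp
  finally have L: "((\<lambda>y. D vv \<otimes>\<^bsub>AA\<^esub> E y) ^^ Suc k) x = rh r \<otimes>\<^bsub>AA\<^esub> ((rh r [^]\<^bsub>AA\<^esub> k) \<otimes>\<^bsub>AA\<^esub> D ((D ^^ k) x))" .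
  have rr: "rh r \<in> carrier AA" using rc by simp
  have "(rh r [^]\<^bsub>AA\<^esub> Suc k) \<otimes>\<^bsub>AA\<^esub> (D ^^ Suc k) x = ((rh r [^]\<^bsub>AA\<^esub> k) \<otimes>\<^bsub>AA\<^esub> rh r) \<otimes>\<^bsub>AA\<^esub> D ((D ^^ k) x)"
    by simp
  also have "\<dots> = rh r \<otimes>\<^bsub>AA\<^esub> ((rh r [^]\<^bsub>AA\<^esub> k) \<otimes>\<^bsub>AA\<^esub> D ((D ^^ k) x))"
    using A.m_assoc[OF rkc rr Dy] A.m_lcomm[OF rr rkc Dy] by simp
  finally show ?case using L by simp
qed

lemma Eq_zero:
  assumes L: "is_LND AA cemb D"
  shows "E (D vv) = \<zero>\<^bsub>AA\<^esub>"
proof -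
  have D: "der AA D" using LND_der[OF L] .
  have Dk: "\<And>a. a \<in> carrier R \<Longrightarrow> D (rh a) = \<zero>\<^bsub>AA\<^esub>" using mlkill[OF L] .
  obtain N where N: "(D ^^ N) vv = \<zero>\<^bsub>AA\<^esub>" using LND_nil[OF L] v_closed by blast
  have "((\<lambda>y. D vv \<otimes>\<^bsub>AA\<^esub> E y) ^^ N) vv = \<zero>\<^bsub>AA\<^esub>"
    using Fpow[OF D Dk v_closed, of N] N rc by simp
  moreover have "\<forall>b\<in>carrier AA. \<exists>n. (E ^^ n) b = \<zero>\<^bsub>AA\<^esub>" using E_nil by blast
  moreover have "E vv \<noteq> \<zero>\<^bsub>AA\<^esub>" using Ev rho_r_nz by simp
  moreover have "E (E vv) = \<zero>\<^bsub>AA\<^esub>" using Ev E_rho[OF rc] by simp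
  ultimately show ?thesis
    using A.lnd_factor[OF Eder char0 _ v_closed _ _ A.der_cl[OF D v_closed]] by blast
qed

lemma main_dir:
  assumes L: "is_LND AA cemb D"
  shows "\<exists>a\<in>carrier R. \<forall>x\<in>carrier AA. D x = rh a \<otimes>\<^bsub>AA\<^esub> E x"
proof -
  have D: "der AA D" using LND_der[OF L] .
  have Dk: "\<And>a. a \<in> carrier R \<Longrightarrow> D (rh a) = \<zero>\<^bsub>AA\<^esub>" using mlkill[OF L] .
  let ?q = "D vv" and ?p = "D uu"
  have q: "?q \<in> carrier AA" and p: "?p \<in> carrier AA" using A.der_cl[OF D] by auto
  have Eq: "E ?q = \<zero>\<^bsub>AA\<^esub>" by (rule Eq_zero[OF L])
  have pq: "rh r \<otimes>\<^bsub>AA\<^esub> ?p = rh s \<otimes>\<^bsub>AA\<^esub> ?q"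
    using key_rel[OF D Dk u_closed] Eu q sc by (simp add: A.m_comm)
  have "rh r \<otimes>\<^bsub>AA\<^esub> E ?p = rh s \<otimes>\<^bsub>AA\<^esub> E ?q"
    using pq E_lin[OF rc p] E_lin[OF sc q] by simp
  then have "rh r \<otimes>\<^bsub>AA\<^esub> E ?p = \<zero>\<^bsub>AA\<^esub>" using Eq sc by simp
  then have Ep: "E ?p = \<zero>\<^bsub>AA\<^esub>" using rho_r_nz rc A.der_cl[OF Eder p] A.integral_iff by auto
  have inML: "z \<in> carrier AA \<Longrightarrow> E z = \<zero>\<^bsub>AA\<^esub> \<Longrightarrow> z \<in> rh ` carrier R" for z
  proof -
    assume z: "z \<in> carrier AA" and Ez: "E z = \<zero>\<^bsub>AA\<^esub>"
    have "z \<in> makar_limanov AA cemb"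
      unfolding makar_limanov_def
    proof (intro CollectI conjI allI impI z)
      fix D' assume L': "is_LND AA cemb D'"
      have D': "der AA D'" using LND_der[OF L'] .
      have "rh r \<otimes>\<^bsub>AA\<^esub> D' z = D' vv \<otimes>\<^bsub>AA\<^esub> E z"
        using key_rel[OF D' mlkill[OF L'] z] by simp
      then have "rh r \<otimes>\<^bsub>AA\<^esub> D' z = \<zero>\<^bsub>AA\<^esub>" using Ez A.der_cl[OF D' v_closed] by simp
      then show "D' z = \<zero>\<^bsub>AA\<^esub>" using rho_r_nz rc A.der_cl[OF D' z] A.integral_iff by auto
    qed
    then show ?thesis using MLh by simp
  qed
  obtain b where b: "b \<in> carrier R" "?q = rh b" using inML[OF q Eq] by blast
  obtain c where c: "c \<in> carrier R" "?p = rh c" using inML[OF p Ep] by blast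
  have "rh (r \<otimes> c) = rh (s \<otimes> b)"
    using pq b c rc sc rho_hom by (simp add: ring_hom_mult)
  then have "r \<otimes> c = s \<otimes> b" using rho_inj rc sc b c by simp
  then obtain a where a: "a \<in> carrier R" "b = a \<otimes> r"
    using factorial_domain.coprime_div[OF Rfact rc sc b(1) c(1) r0 s0 cop] by blast
  show ?thesis
  proof (intro bexI[OF _ a(1)] ballI)
    fix x assume x: "x \<in> carrier AA"
    have "rh r \<otimes>\<^bsub>AA\<^esub> D x = ?q \<otimes>\<^bsub>AA\<^esub> E x" using key_rel[OF D Dk x] by simp
    also have "\<dots> = rh r \<otimes>\<^bsub>AA\<^esub> (rh a \<otimes>\<^bsub>AA\<^esub> E x)"
      using b a rc rho_hom A.der_cl[OF Eder x] by (simp add: ring_hom_mult A.m_assoc A.m_comm A.m_lcomm)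
    finally show "D x = rh a \<otimes>\<^bsub>AA\<^esub> E x"
      using rho_r_nz rc a A.der_cl[OF Eder x] A.der_cl[OF D x] A.m_lcancel by simp
  qed
qed

lemma conv_dir:
  assumes Dc: "D \<in> carrier AA \<rightarrow> carrier AA" and a: "a \<in> carrier R"
    and Dx: "\<forall>x\<in>carrier AA. D x = rh a \<otimes>\<^bsub>AA\<^esub> E x"
  shows "is_LND AA cemb D"
  unfolding is_LND_def lin_derivation_def
proof (intro conjI ballI Dc)
  note Ecl = A.der_cl[OF Eder]
  have ra: "rh a \<in> carrier AA" using a by simp
  fix x y assume x: "x \<in> carrier AA" and y: "y \<in> carrier AA"
  show "D (x \<oplus>\<^bsub>AA\<^esub> y) = D x \<oplus>\<^bsub>AA\<^esub> D y"
    using x y Dx Ecl ra by (simp add: A.der_add[OF Eder] A.r_distr)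
  show "D (x \<otimes>\<^bsub>AA\<^esub> y) = x \<otimes>\<^bsub>AA\<^esub> D y \<oplus>\<^bsub>AA\<^esub> D x \<otimes>\<^bsub>AA\<^esub> y"
    using x y Dx Ecl ra by (simp add: A.der_mult[OF Eder] A.r_distr A.m_lcomm A.m_assoc)
next
  note Ecl = A.der_cl[OF Eder]
  have ra: "rh a \<in> carrier AA" using a by simp
  fix c :: complex and x assume x: "x \<in> carrier AA"
  have ic: "iota c \<in> carrier R" by (rule iota_closed)
  show "D (cemb c \<otimes>\<^bsub>AA\<^esub> x) = cemb c \<otimes>\<^bsub>AA\<^esub> D x"
    using x Dx Ecl ra E_lin[OF ic x] ic by (simp add: A.m_lcomm)
next
  note Ecl = A.der_cl[OF Eder]
  have ra: "rh a \<in> carrier AA" using a by simp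
  fix b assume b: "b \<in> carrier AA"
  have pw: "(D ^^ n) b = (rh a [^]\<^bsub>AA\<^esub> n) \<otimes>\<^bsub>AA\<^esub> (E ^^ n) b" for n
  proof (induction n)
    case 0 then show ?case using b by simp
  next
    case (Suc n)
    have rk: "rh a [^]\<^bsub>AA\<^esub> n = rh (a [^] n)"
      using ring_hom_ring.hom_nat_pow[OF ring_hom_ringI2[OF R.ring_axioms A.ring_axioms rho_hom] a] by simp
    have c1: "rh a [^]\<^bsub>AA\<^esub> n \<otimes>\<^bsub>AA\<^esub> (E ^^ n) b \<in> carrier AA"
      using ra A.der_pow_cl[OF Eder b] by simp
    have "(D ^^ Suc n) b = rh a \<otimes>\<^bsub>AA\<^esub> E (rh (a [^] n) \<otimes>\<^bsub>AA\<^esub> (E ^^ n) b)"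
      using Suc Dx c1 rk by simp
    also have "\<dots> = rh a \<otimes>\<^bsub>AA\<^esub> (rh (a [^] n) \<otimes>\<^bsub>AA\<^esub> E ((E ^^ n) b))"
      using E_lin[of "a [^] n" "(E ^^ n) b"] a A.der_pow_cl[OF Eder b] by simp
    finally have L: "(D ^^ Suc n) b = rh a \<otimes>\<^bsub>AA\<^esub> (rh (a [^] n) \<otimes>\<^bsub>AA\<^esub> E ((E ^^ n) b))" .
    have Y: "E ((E ^^ n) b) \<in> carrier AA" using Ecl[OF A.der_pow_cl[OF Eder b]] .
    have P: "rh (a [^] n) \<in> carrier AA" using a by simp
    have "(rh a [^]\<^bsub>AA\<^esub> Suc n) \<otimes>\<^bsub>AA\<^esub> (E ^^ Suc n) b = (rh (a [^] n) \<otimes>\<^bsub>AA\<^esub> rh a) \<otimes>\<^bsub>AA\<^esub> E ((E ^^ n) b)"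
      using rk by simp
    also have "\<dots> = rh a \<otimes>\<^bsub>AA\<^esub> (rh (a [^] n) \<otimes>\<^bsub>AA\<^esub> E ((E ^^ n) b))"
      using A.m_assoc[OF P ra Y] A.m_lcomm[OF ra P Y] by simp
    finally show ?case using L by simp
  qed
  obtain n where "(E ^^ n) b = \<zero>\<^bsub>AA\<^esub>" using E_nil[OF b] by blast
  then show "\<exists>n. (D ^^ n) b = \<zero>\<^bsub>AA\<^esub>" using pw ra by (intro exI[of _ n]) simp
qed

end

end


theorem mainTheorem3:
  fixes R :: "'a ring" and \<iota> :: "complex \<Rightarrow> 'a" and r s :: 'a
  assumes "noetherian_domain R"
    and "factorial_domain R"
    and "\<iota> \<in> ring_hom complex_ring R"
    and "r \<in> carrier R" and "s \<in> carrier R"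
    and "r \<noteq> \<zero>\<^bsub>R\<^esub>" and "s \<noteq> \<zero>\<^bsub>R\<^esub>"
    and "\<forall>d\<in>carrier R. d divides\<^bsub>R\<^esub> r \<and> d divides\<^bsub>R\<^esub> s \<longrightarrow> d \<in> Units R"
    and "factorial_domain (Ars R r s)"
    and "makar_limanov (Ars R r s) (rho R r s \<circ> \<iota>) = rho R r s ` carrier R"
  shows "(\<exists>E. lin_derivation (Ars R r s) (carrier R) (rho R r s) E
              \<and> E (uel R r s) = rho R r s s \<and> E (vel R r s) = rho R r s r)
       \<and> (\<forall>E. lin_derivation (Ars R r s) (carrier R) (rho R r s) E
              \<and> E (uel R r s) = rho R r s s \<and> E (vel R r s) = rho R r s r \<longrightarrow>
            (\<forall>D. is_LND (Ars R r s) (rho R r s \<circ> \<iota>) D \<longleftrightarrow>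
                 (D \<in> carrier (Ars R r s) \<rightarrow> carrier (Ars R r s) \<and>
                  (\<exists>a\<in>carrier R. \<forall>x\<in>carrier (Ars R r s).
                     D x = rho R r s a \<otimes>\<^bsub>Ars R r s\<^esub> E x))))"
proof -
  have dR: "domain R" using assms(2) by (rule factorial_domain.axioms(1))
  have dA: "domain (Ars R r s)" using assms(9) by (rule factorial_domain.axioms(1))
  interpret M: arsmain R r s \<iota>
    by (intro arsmain.intro arsset.intro arsmain_axioms.intro dR dA assms(2-8,10))
  show ?thesis
  proof (intro conjI allI impI)
    show "\<exists>E. lin_derivation (Ars R r s) (carrier R) (rho R r s) E
              \<and> E (uel R r s) = rho R r s s \<and> E (vel R r s) = rho R r s r"
      using M.Eop_lin M.Eop_u M.Eop_v by blast
  next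
    fix E D
    assume EE: "lin_derivation (Ars R r s) (carrier R) (rho R r s) E
              \<and> E (uel R r s) = rho R r s s \<and> E (vel R r s) = rho R r s r"
    then have E1: "lin_derivation (Ars R r s) (carrier R) (rho R r s) E"
      and E2: "E (uel R r s) = rho R r s s" and E3: "E (vel R r s) = rho R r s r" by auto
    show "is_LND (Ars R r s) (rho R r s \<circ> \<iota>) D \<longleftrightarrow>
                 (D \<in> carrier (Ars R r s) \<rightarrow> carrier (Ars R r s) \<and>
                  (\<exists>a\<in>carrier R. \<forall>x\<in>carrier (Ars R r s).
                     D x = rho R r s a \<otimes>\<^bsub>Ars R r s\<^esub> E x))"
    proof
      assume L: "is_LND (Ars R r s) (rho R r s \<circ> \<iota>) D"
      have "D \<in> carrier (Ars R r s) \<rightarrow> carrier (Ars R r s)"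
        using L unfolding is_LND_def lin_derivation_def by blast
      then show "D \<in> carrier (Ars R r s) \<rightarrow> carrier (Ars R r s) \<and>
                  (\<exists>a\<in>carrier R. \<forall>x\<in>carrier (Ars R r s).
                     D x = rho R r s a \<otimes>\<^bsub>Ars R r s\<^esub> E x)"
        using M.main_dir[OF E1 E2 E3 L] by blast
    next
      assume H: "D \<in> carrier (Ars R r s) \<rightarrow> carrier (Ars R r s) \<and>
                  (\<exists>a\<in>carrier R. \<forall>x\<in>carrier (Ars R r s).
                     D x = rho R r s a \<otimes>\<^bsub>Ars R r s\<^esub> E x)"
      then obtain a where a: "a \<in> carrier R" "\<forall>x\<in>carrier (Ars R r s). D x = rho R r s a \<otimes>\<^bsub>Ars R r s\<^esub> E x"
        by blast
      show "is_LND (Ars R r s) (rho R r s \<circ> \<iota>) D"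
        using M.conv_dir[OF E1 E2 E3 _ a(1) a(2)] H by blast
    qed
  qed
qed

end
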